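(* Let $P$ be a probability distribution over a finite set of at least two items $\mathcal{I}=\{1,2,\dots\}$ with $P(1)>P(2)>0$, and let $m=P(1)/P(2)$ (so $m>1$). Let $Q_1$ be a semi-distribution that agrees with $P$ on every item except item $1$, with $P(1)>Q_1(1)>0$, and let $m_1=P(1)/Q_1(1)$ (so $m_1>1$). Let $Q_2$ be a semi-distribution that agrees with $P$ on every item except item $2$, with $P(2)>Q_2(2)>0$, and let $m_2=P(2)/Q_2(2)$. Then $\mathrm{LogLoss}(Q_2\mid P)<\mathrm{LogLoss}(Q_1\mid P)$ whenever $m_2<m_1^{m}$.
   Context: A semi-distribution $Q$ on a finite item set $\mathcal{I}$ is a function $Q:\mathcal{I}\to[0,1]$ with $\sum_i Q(i)\le 1$; a probability distribution is one whose values sum to $1$. For a probability distribution $P$ and semi-distribution $Q$, $\mathrm{LogLoss}(Q\mid P):=\mathbb{E}_{o\sim P}[-\ln Q(o)]=-\sum_{i:P(i)>0}P(i)\ln Q(i)$. *)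

theory Defs
  imports Complex_Main
begin

definition semi_distribution :: "'a set \<Rightarrow> ('a \<Rightarrow> real) \<Rightarrow> bool" where
  "semi_distribution I Q \<longleftrightarrow> (\<forall>i\<in>I. 0 \<le> Q i \<and> Q i \<le> 1) \<and> (\<Sum>i\<in>I. Q i) \<le> 1"

definition prob_distribution :: "'a set \<Rightarrow> ('a \<Rightarrow> real) \<Rightarrow> bool" where
  "prob_distribution I P \<longleftrightarrow> semi_distribution I P \<and> (\<Sum>i\<in>I. P i) = 1"

definition LogLoss :: "'a set \<Rightarrow> ('a \<Rightarrow> real) \<Rightarrow> ('a \<Rightarrow> real) \<Rightarrow> real" where
  "LogLoss I Q P = - (\<Sum>i\<in>{i\<in>I. P i > 0}. P i * ln (Q i))"

end

theory Submission
  imports Defs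
begin

theorem corollary1:
  fixes I :: "'a set" and P Q1 Q2 :: "'a \<Rightarrow> real" and i1 i2 :: 'a
  assumes finI: "finite I"
    and items: "i1 \<in> I" "i2 \<in> I" "i1 \<noteq> i2"
    and P: "prob_distribution I P"
    and P12: "P i1 > P i2" "P i2 > 0"
    and Q1: "semi_distribution I Q1"
    and Q1_agree: "\<forall>i\<in>I. i \<noteq> i1 \<longrightarrow> Q1 i = P i"
    and Q1_1: "P i1 > Q1 i1" "Q1 i1 > 0"
    and Q2: "semi_distribution I Q2"
    and Q2_agree: "\<forall>i\<in>I. i \<noteq> i2 \<longrightarrow> Q2 i = P i"
    and Q2_2: "P i2 > Q2 i2" "Q2 i2 > 0"
    and cond: "P i2 / Q2 i2 < (P i1 / Q1 i1) powr (P i1 / P i2)"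
  shows "LogLoss I Q2 P < LogLoss I Q1 P"
proof -
  define S where "S = {i\<in>I. P i > 0}"
  have finS: "finite S" using finI S_def by simp
  have p1: "P i1 > 0" using P12 by linarith
  have i1S: "i1 \<in> S" and i2S: "i2 \<in> S" using items p1 P12 S_def by auto
  define L0 where "L0 = (\<Sum>i\<in>S. P i * ln (P i))"
  have e1: "(\<Sum>i\<in>S. P i * ln (Q1 i)) = P i1 * ln (Q1 i1) + (\<Sum>i\<in>S-{i1}. P i * ln (P i))"
  proof -
    have "(\<Sum>i\<in>S. P i * ln (Q1 i)) = P i1 * ln (Q1 i1) + (\<Sum>i\<in>S-{i1}. P i * ln (Q1 i))"
      using sum.remove[OF finS i1S] by blast
    also have "(\<Sum>i\<in>S-{i1}. P i * ln (Q1 i)) = (\<Sum>i\<in>S-{i1}. P i * ln (P i))"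
      using Q1_agree S_def by (intro sum.cong) auto
    finally show ?thesis .
  qed
  have e2: "(\<Sum>i\<in>S. P i * ln (Q2 i)) = P i2 * ln (Q2 i2) + (\<Sum>i\<in>S-{i2}. P i * ln (P i))"
  proof -
    have "(\<Sum>i\<in>S. P i * ln (Q2 i)) = P i2 * ln (Q2 i2) + (\<Sum>i\<in>S-{i2}. P i * ln (Q2 i))"
      using sum.remove[OF finS i2S] by blast
    also have "(\<Sum>i\<in>S-{i2}. P i * ln (Q2 i)) = (\<Sum>i\<in>S-{i2}. P i * ln (P i))"
      using Q2_agree S_def by (intro sum.cong) auto
    finally show ?thesis .
  qed
  have r1: "L0 = P i1 * ln (P i1) + (\<Sum>i\<in>S-{i1}. P i * ln (P i))"
    unfolding L0_def using sum.remove[OF finS i1S] by blast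
  have r2: "L0 = P i2 * ln (P i2) + (\<Sum>i\<in>S-{i2}. P i * ln (P i))"
    unfolding L0_def using sum.remove[OF finS i2S] by blast
  have m1pos: "P i1 / Q1 i1 > 0" using p1 Q1_1 by simp
  have m2pos: "P i2 / Q2 i2 > 0" using P12 Q2_2 by simp
  have "ln (P i2 / Q2 i2) < ln ((P i1 / Q1 i1) powr (P i1 / P i2))"
    using cond m2pos by (subst ln_less_cancel_iff) auto
  also have "\<dots> = (P i1 / P i2) * ln (P i1 / Q1 i1)"
    using m1pos by (simp add: ln_powr)
  finally have k: "ln (P i2 / Q2 i2) < (P i1 / P i2) * ln (P i1 / Q1 i1)" .
  have "P i2 * ln (P i2 / Q2 i2) < P i2 * ((P i1 / P i2) * ln (P i1 / Q1 i1))"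
    using k P12 by (intro mult_strict_left_mono) auto
  hence k2: "P i2 * (ln (P i2) - ln (Q2 i2)) < P i1 * (ln (P i1) - ln (Q1 i1))"
    using P12 p1 Q1_1 Q2_2 by (simp add: ln_div)
  show ?thesis unfolding LogLoss_def S_def[symmetric] e1 e2
    using r1 r2 k2 by (simp add: algebra_simps)
qed

end
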